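(* Let $(L_i,\mathbf v_i)$, $i\in\{1,2,3,4\}$, be four pairwise transverse decorated Lagrangians in $\mathbf R^{2n}$. Then the matrix of the cross ratio $[L_1,L_2,L_3,L_4]$ in the basis $\mathbf v_1$ of $L_1$ is $$[L_1,L_2,L_3,L_4]_{\mathbf v_1}=-\Lambda_{31}^{-1}\Lambda_{34}\Lambda_{14}^{-1}\Lambda_{12}\Lambda_{32}^{-1}\Lambda_{31}=-\Lambda_{41}^{-1}\Lambda_{43}\Lambda_{23}^{-1}\Lambda_{21}.$$
   Context: $\mathbf R^{2n}$ carries the standard symplectic form $\omega(x,y)={}^T x\begin{pmatrix}0&\mathrm{Id}\\-\mathrm{Id}&0\end{pmatrix}y$. A decorated Lagrangian $(L,\mathbf v)$ is a Lagrangian subspace with a chosen basis; transverse means trivial intersection; $\Lambda_{ij}=(\omega(v_{i,k},v_{j,l}))_{k,l}$. If $M$ and $L_1$ are Lagrangians transverse to a Lagrangian $L_2$, $M_{L_1\to L_2}\colon L_1\to L_2$ denotes the unique linear map with graph $M$. For Lagrangians $L_1,M_1,L_2,M_2$ with $L_1\pitchfork L_2$, $M_1\pitchfork L_2$, $M_2\pitchfork L_1$, the cross ratio is the endomorphism $[L_1,M_1,L_2,M_2]=-(M_2)_{L_2\to L_1}\circ(M_1)_{L_1\to L_2}$ of $L_1$. (In the claim, the roles are $M_1=L_2$, $L_2=L_3$, $M_2=L_4$.) *)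

theory Defs
  imports "HOL-Analysis.Analysis"
begin

text \<open>R^{2n} is modelled as pairs (x,y) of vectors in R^n; the standard symplectic form
  omega(u,w) = u^T [[0,Id],[-Id,0]] w = x_u . y_w - y_u . x_w.\<close>

type_synonym 'n sympl = "(real^'n) \<times> (real^'n)"

definition omega :: "'n::finite sympl \<Rightarrow> 'n sympl \<Rightarrow> real" where
  "omega u w = fst u \<bullet> snd w - snd u \<bullet> fst w"

definition lagrangian :: "'n::finite sympl set \<Rightarrow> bool" where
  "lagrangian L \<longleftrightarrow> subspace L \<and> dim L = CARD('n) \<and> (\<forall>x\<in>L. \<forall>y\<in>L. omega x y = 0)"

definition decorated_lagrangian :: "'n::finite sympl set \<Rightarrow> ('n \<Rightarrow> 'n sympl) \<Rightarrow> bool" where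
  "decorated_lagrangian L v \<longleftrightarrow> lagrangian L \<and> inj v \<and> independent (range v) \<and> span (range v) = L"

definition transverse :: "'n::finite sympl set \<Rightarrow> 'n sympl set \<Rightarrow> bool" where
  "transverse L M \<longleftrightarrow> L \<inter> M = {0}"

definition Lam :: "('n::finite \<Rightarrow> 'n sympl) \<Rightarrow> ('n \<Rightarrow> 'n sympl) \<Rightarrow> real^'n^'n" where
  "Lam vi vj = (\<chi> k l. omega (vi k) (vj l))"

text \<open>For M, L1 transverse to L2: the map L1 -> L2 whose graph is M, i.e. x maps to the unique
  y in L2 with x + y in M.\<close>
definition graph_map :: "'n::finite sympl set \<Rightarrow> 'n sympl set \<Rightarrow> 'n sympl set \<Rightarrow> 'n sympl \<Rightarrow> 'n sympl" where
  "graph_map M L1 L2 x = (THE y. y \<in> L2 \<and> x + y \<in> M)"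

definition cross_ratio :: "'n::finite sympl set \<Rightarrow> 'n sympl set \<Rightarrow> 'n sympl set \<Rightarrow> 'n sympl set \<Rightarrow> 'n sympl \<Rightarrow> 'n sympl" where
  "cross_ratio L1 M1 L2 M2 x = - graph_map M2 L2 L1 (graph_map M1 L1 L2 x)"

definition matrix_in_basis :: "('n::finite sympl \<Rightarrow> 'n sympl) \<Rightarrow> ('n \<Rightarrow> 'n sympl) \<Rightarrow> real^'n^'n \<Rightarrow> bool" where
  "matrix_in_basis T v A \<longleftrightarrow> (\<forall>l. T (v l) = (\<Sum>k\<in>UNIV. (A$k$l) *\<^sub>R v k))"

end

theory Submission
  imports Defs "HOL-Library.Product_Plus"
begin

definition comb :: "('n::finite \<Rightarrow> 'n sympl) \<Rightarrow> real^'n \<Rightarrow> 'n sympl" where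
  "comb v a = (\<Sum>k\<in>UNIV. (a$k) *\<^sub>R v k)"

lemma omega_add_left: "omega (x + y) z = omega x z + omega y z"
  by (simp add: omega_def inner_add_left)
lemma omega_add_right: "omega z (x + y) = omega z x + omega z y"
  by (simp add: omega_def inner_add_right)
lemma omega_scale_left: "omega (c *\<^sub>R x) z = c * omega x z"
  by (simp add: omega_def algebra_simps)
lemma omega_scale_right: "omega z (c *\<^sub>R x) = c * omega z x"
  by (simp add: omega_def algebra_simps)
lemma omega_antisym: "omega u w = - omega w u"
  by (simp add: omega_def inner_commute)
lemma omega_diff_right: "omega z (x - y) = omega z x - omega z y"
  by (simp add: omega_def inner_diff_right)
lemma omega_neg_right: "omega z (- x) = - omega z x"
  by (simp add: omega_def)

lemma omega_comb_right: "omega u (comb v a) = (\<Sum>l\<in>UNIV. a$l * omega u (v l))"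
  by (simp add: comb_def omega_def fst_sum snd_sum inner_sum_right inner_sum_left
      sum_subtractf algebra_simps sum_distrib_left)
lemma omega_comb_left: "omega (comb v a) u = (\<Sum>l\<in>UNIV. a$l * omega (v l) u)"
  by (simp add: comb_def omega_def fst_sum snd_sum inner_sum_right inner_sum_left
      sum_subtractf algebra_simps sum_distrib_left)

lemma Lam_mult: "(Lam u v *v a) $ k = omega (u k) (comb v a)"
  by (simp add: Lam_def omega_comb_right matrix_vector_mult_def mult.commute)

lemma comb_add: "comb v (a + b) = comb v a + comb v b"
  by (simp add: comb_def scaleR_add_left sum.distrib)
lemma comb_neg: "comb v (- a) = - comb v a"
  by (simp add: comb_def sum_negf)

lemma nondeg: assumes "\<And>u. omega u x = 0" shows "x = 0"
proof -
  have "omega (snd x, 0) x = 0" "omega (0, fst x) x = 0" using assms by auto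
  then have "snd x \<bullet> snd x = 0" "fst x \<bullet> fst x = 0" by (auto simp: omega_def)
  then show ?thesis by (simp add: prod_eq_iff)
qed

lemma comb_in: assumes "decorated_lagrangian L v" shows "comb v a \<in> L"
proof -
  have "comb v a \<in> span (range v)" unfolding comb_def
    by (intro span_sum span_scale span_base) auto
  then show ?thesis using assms by (simp add: decorated_lagrangian_def)
qed

lemma in_comb: assumes "decorated_lagrangian L v" "x \<in> L" shows "\<exists>a. x = comb v a"
proof -
  have "x \<in> span (range v)" using assms by (simp add: decorated_lagrangian_def)
  then obtain u where u: "x = (\<Sum>s\<in>range v. u s *\<^sub>R s)"
    using span_finite[of "range v"] by auto
  have inj: "inj v" using assms by (simp add: decorated_lagrangian_def)
  have "x = (\<Sum>k\<in>UNIV. u (v k) *\<^sub>R v k)" unfolding u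
    by (subst sum.reindex[OF inj, unfolded o_def]) simp
  then have "x = comb v (\<chi> k. u (v k))" by (simp add: comb_def)
  then show ?thesis by blast
qed

lemma comb_zero: assumes "decorated_lagrangian L v" "comb v a = 0" shows "a = 0"
proof -
  have inj: "inj v" and ind: "independent (range v)" using assms by (auto simp: decorated_lagrangian_def)
  define c where "c s = a $ (inv v s)" for s
  have cv: "c (v k) = a $ k" for k using inj by (simp add: c_def)
  have "(\<Sum>s\<in>range v. c s *\<^sub>R s) = (\<Sum>k\<in>UNIV. c (v k) *\<^sub>R v k)"
    by (subst sum.reindex[OF inj, unfolded o_def]) simp
  also have "\<dots> = comb v a" by (simp only: cv comb_def)
  finally have z: "(\<Sum>s\<in>range v. c s *\<^sub>R s) = 0" using assms(2) by simp
  have "\<forall>c. (\<Sum>s\<in>range v. c s *\<^sub>R s) = 0 \<longrightarrow> (\<forall>s\<in>range v. c s = 0)"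
    using ind by (simp only: independent_explicit) (drule conjunct2, assumption)
  then have "\<forall>s\<in>range v. c s = 0" using z by blast
  then have "a $ k = 0" for k using cv by (metis rangeI)
  then show ?thesis by (simp add: vec_eq_iff)
qed

lemma isotropic: assumes "decorated_lagrangian L v" "x \<in> L" "y \<in> L" shows "omega x y = 0"
  using assms by (auto simp: decorated_lagrangian_def lagrangian_def)

lemma sum_full:
  assumes "decorated_lagrangian L v" "decorated_lagrangian M w" "transverse L M"
  shows "\<exists>p\<in>L. \<exists>q\<in>M. x = p + q"
proof -
  define S where "S = {x + y |x y. x \<in> L \<and> y \<in> M}"
  have sL: "subspace L" "dim L = CARD('a)" and sM: "subspace M" "dim M = CARD('a)"
    using assms by (auto simp: decorated_lagrangian_def lagrangian_def)
  have "L \<inter> M = {0}" using assms by (simp add: transverse_def)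
  then have "dim (L \<inter> M) = 0" by simp
  then have d: "dim S = 2 * CARD('a)"
    using dim_sums_Int[OF sL(1) sM(1)] sL sM unfolding S_def by (simp only:)
  have "DIM('a sympl) = 2 * CARD('a)" by (simp only: DIM_prod DIM_cart DIM_real)
  with d have "dim S = DIM('a sympl)" by (simp only:)
  then have "span S = UNIV" by (simp only: dim_eq_full)
  moreover have "subspace S"
    unfolding S_def by (rule subspace_sums[OF sL(1) sM(1)])
  ultimately have "S = UNIV" by (simp only: span_eq_iff[symmetric])
  then have "x \<in> S" by (simp only: UNIV_I)
  then show ?thesis unfolding S_def by blast
qed

lemma minv: assumes "invertible (A::real^'n^'n)"
  shows "A ** matrix_inv A = mat 1" "matrix_inv A ** A = mat 1"
proof -
  have "\<exists>A'. A ** A' = mat 1 \<and> A' ** A = mat 1" using assms by (simp add: invertible_def)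
  from someI_ex[OF this] show "A ** matrix_inv A = mat 1" "matrix_inv A ** A = mat 1"
    by (simp_all add: matrix_inv_def)
qed

lemma Lam_mult_eq: "Lam u v *v a = (\<chi> k. omega (u k) (comb v a))"
  by (simp add: vec_eq_iff Lam_mult)

lemma Lam_inv:
  assumes L: "decorated_lagrangian L v" and M: "decorated_lagrangian M w" and t: "transverse L M"
  shows "invertible (Lam v w)"
proof -
  have "\<forall>b. Lam v w *v b = 0 \<longrightarrow> b = 0"
  proof (intro allI impI)
    fix b assume b: "Lam v w *v b = 0"
    define y where "y = comb w b"
    have yM: "y \<in> M" using comb_in[OF M] y_def by simp
    have "omega u y = 0" for u
    proof -
      obtain p q where pq: "p \<in> L" "q \<in> M" "u = p + q" using sum_full[OF L M t] by blast
      obtain a where a: "p = comb v a" using in_comb[OF L pq(1)] by blast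
      have "omega p y = (\<Sum>l\<in>UNIV. a$l * omega (v l) y)" using a omega_comb_left by simp
      also have "\<dots> = 0" using b by (simp add: y_def vec_eq_iff Lam_mult[symmetric])
      finally have "omega p y = 0" .
      moreover have "omega q y = 0" using isotropic[OF M pq(2) yM] .
      ultimately show ?thesis using pq(3) by (simp add: omega_add_left)
    qed
    then have "y = 0" using nondeg by blast
    then show "b = 0" using comb_zero[OF M] y_def by simp
  qed
  then have "\<exists>B. B ** Lam v w = mat 1" using matrix_left_invertible_ker by blast
  then show ?thesis using invertible_left_inverse by blast
qed

lemma solve: assumes "invertible (A::real^'n^'n)" "A *v b = c" shows "b = matrix_inv A *v c"
proof -
  have "b = mat 1 *v b" by simp
  also have "\<dots> = (matrix_inv A ** A) *v b" using minv(2)[OF assms(1)] by simp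
  also have "\<dots> = matrix_inv A *v c" using assms(2) by (simp add: matrix_vector_mul_assoc[symmetric])
  finally show ?thesis .
qed

lemma mv_neg_left: "(- (A::real^'n^'m)) *v x = - (A *v x)"
  by (simp add: vec_eq_iff matrix_vector_mult_def sum_negf)
lemma mv_neg_right: "(A::real^'n^'m) *v (- x) = - (A *v x)"
  by (simp add: vec_eq_iff matrix_vector_mult_def sum_negf)

lemma graph_map_eq:
  assumes M: "decorated_lagrangian M vm" and L2: "decorated_lagrangian L2 v2" and t: "transverse M L2"
  shows "graph_map M L1 L2 (comb v1 a) = comb v2 (- (matrix_inv (Lam vm v2) ** Lam vm v1) *v a)"
proof -
  define x where "x = comb v1 a"
  obtain p q where pq: "p \<in> M" "q \<in> L2" "x = p + q" using sum_full[OF M L2 t] by blast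
  have sM: "subspace M" and sL: "subspace L2" using M L2 by (auto simp: decorated_lagrangian_def lagrangian_def)
  have th: "graph_map M L1 L2 x = - q" unfolding graph_map_def
  proof (rule the_equality)
    show "- q \<in> L2 \<and> x + - q \<in> M" using pq sL by (simp add: subspace_neg)
  next
    fix y assume y: "y \<in> L2 \<and> x + y \<in> M"
    have e: "y + q = (x + y) - p" using pq by simp
    have "(x + y) - p \<in> M" using subspace_diff[OF sM, of "x+y" p] y pq(1) by blast
    then have "y + q \<in> M" unfolding e .
    moreover have "y + q \<in> L2" using y pq sL by (simp add: subspace_add)
    ultimately have "y + q = 0" using t by (auto simp: transverse_def)
    then show "y = - q" by (simp add: add_eq_0_iff)
  qed
  obtain b where b: "- q = comb v2 b" using in_comb[OF L2] pq sL by (meson subspace_neg)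
  have "x + comb v2 b = p" by (simp only: pq(3) b[symmetric]) simp
  then have "x + comb v2 b \<in> M" using pq(1) by simp
  moreover have "vm k \<in> M" for k
  proof -
    have "vm k \<in> span (range vm)" by (rule span_base) simp
    then show ?thesis using M by (simp add: decorated_lagrangian_def)
  qed
  ultimately have "\<And>k. omega (vm k) (x + comb v2 b) = 0" using isotropic[OF M] by blast
  then have "Lam vm v1 *v a + Lam vm v2 *v b = 0"
    by (simp add: vec_eq_iff Lam_mult omega_add_right x_def)
  then have "Lam vm v2 *v b = - (Lam vm v1 *v a)" by (metis add.commute eq_neg_iff_add_eq_0)
  then have "b = matrix_inv (Lam vm v2) *v (- (Lam vm v1 *v a))"
    using solve Lam_inv[OF M L2 t] by blast
  then have "b = (- (matrix_inv (Lam vm v2) ** Lam vm v1)) *v a"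
    by (simp only: mv_neg_left mv_neg_right matrix_vector_mul_assoc)
  then show ?thesis using th b x_def by simp
qed


lemma basis_in: assumes "decorated_lagrangian L v" shows "v k \<in> L"
proof -
  have "v k \<in> span (range v)" by (rule span_base) simp
  then show ?thesis using assms by (simp add: decorated_lagrangian_def)
qed

lemma transverse_sym: "transverse L M \<Longrightarrow> transverse M L"
  by (simp add: transverse_def Int_commute)

lemma rel:
  assumes L1: "decorated_lagrangian L1 v1" and L3: "decorated_lagrangian L3 v3"
    and t: "transverse L1 L3" and W: "decorated_lagrangian L w"
  shows "Lam w v1 ** matrix_inv (Lam v3 v1) ** Lam v3 w + Lam w v3 ** matrix_inv (Lam v1 v3) ** Lam v1 w = 0"
proof (subst matrix_eq, intro allI)
  fix y
  define x where "x = comb w y"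
  obtain p q where pq: "p \<in> L1" "q \<in> L3" "x = p + q" using sum_full[OF L1 L3 t] by blast
  obtain al where al: "p = comb v1 al" using in_comb[OF L1 pq(1)] by blast
  obtain be where be: "q = comb v3 be" using in_comb[OF L3 pq(2)] by blast
  have "Lam v3 w *v y = Lam v3 v1 *v al"
  proof -
    have "omega (v3 k) x = omega (v3 k) p" for k
      using pq isotropic[OF L3 basis_in[OF L3] pq(2)] by (simp add: omega_add_right)
    then show ?thesis by (simp add: Lam_mult_eq x_def al)
  qed
  then have a1: "al = matrix_inv (Lam v3 v1) *v (Lam v3 w *v y)"
    using solve[OF Lam_inv[OF L3 L1 transverse_sym[OF t]]] by simp
  have "Lam v1 w *v y = Lam v1 v3 *v be"
  proof -
    have "omega (v1 k) x = omega (v1 k) q" for k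
      using pq isotropic[OF L1 basis_in[OF L1] pq(1)] by (simp add: omega_add_right)
    then show ?thesis by (simp add: Lam_mult_eq x_def be)
  qed
  then have b1: "be = matrix_inv (Lam v1 v3) *v (Lam v1 w *v y)"
    using solve[OF Lam_inv[OF L1 L3 t]] by simp
  have "Lam w w *v y = 0"
    using isotropic[OF W basis_in[OF W] comb_in[OF W]] by (simp add: Lam_mult_eq vec_eq_iff)
  moreover have "Lam w w *v y = Lam w v1 *v al + Lam w v3 *v be"
    using pq al be by (simp add: Lam_mult_eq x_def omega_add_right vec_eq_iff)
  ultimately have "Lam w v1 *v al + Lam w v3 *v be = 0" by simp
  then show "(Lam w v1 ** matrix_inv (Lam v3 v1) ** Lam v3 w + Lam w v3 ** matrix_inv (Lam v1 v3) ** Lam v1 w) *v y = 0 *v y"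
    unfolding a1 b1 by (simp add: matrix_vector_mult_add_rdistrib matrix_vector_mul_assoc matrix_mul_assoc)
qed


lemma mm_neg_left: "(- (A::real^'n^'m)) ** B = - (A ** B)"
  by (simp add: vec_eq_iff matrix_matrix_mult_def sum_negf)
lemma mm_neg_right: "(A::real^'n^'m) ** (- B) = - (A ** B)"
  by (simp add: vec_eq_iff matrix_matrix_mult_def sum_negf)

lemma cancel1: "invertible (A::real^'n^'n) \<Longrightarrow> X ** matrix_inv A ** A = X"
  by (metis matrix_mul_assoc matrix_mul_rid minv(2))
lemma cancel2: "invertible (A::real^'n^'n) \<Longrightarrow> X ** A ** matrix_inv A = X"
  by (metis matrix_mul_assoc matrix_mul_rid minv(1))
lemma cancel3: "invertible (A::real^'n^'n) \<Longrightarrow> matrix_inv A ** A = mat 1"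
  by (rule minv(2))

lemma alg:
  fixes A12 A13 A14 A21 A23 A31 A32 A34 A41 A43 :: "real^'n^'n"
  assumes i: "invertible A31" "invertible A13" "invertible A41" "invertible A14"
    "invertible A23" "invertible A32"
  and R4: "A41 ** matrix_inv A31 ** A34 + A43 ** matrix_inv A13 ** A14 = 0"
  and R2: "A21 ** matrix_inv A31 ** A32 + A23 ** matrix_inv A13 ** A12 = 0"
  shows "matrix_inv A31 ** A34 ** matrix_inv A14 ** A12 ** matrix_inv A32 ** A31
       = matrix_inv A41 ** A43 ** matrix_inv A23 ** A21"
proof -
  have r4: "A41 ** matrix_inv A31 ** A34 = - (A43 ** matrix_inv A13 ** A14)"
    using R4 by (simp add: eq_neg_iff_add_eq_0)
  have r2: "A23 ** matrix_inv A13 ** A12 = - (A21 ** matrix_inv A31 ** A32)"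
    using R2 by (metis add.commute eq_neg_iff_add_eq_0)
  have h1: "matrix_inv A31 ** A34 ** matrix_inv A14 = - (matrix_inv A41 ** A43 ** matrix_inv A13)"
  proof -
    have "matrix_inv A31 ** A34 ** matrix_inv A14
        = matrix_inv A41 ** (A41 ** matrix_inv A31 ** A34) ** matrix_inv A14"
      using i by (simp add: matrix_mul_assoc cancel3)
    also have "\<dots> = matrix_inv A41 ** (- (A43 ** matrix_inv A13 ** A14)) ** matrix_inv A14"
      by (simp only: r4)
    also have "\<dots> = - (matrix_inv A41 ** A43 ** matrix_inv A13)"
      using i by (simp add: mm_neg_left mm_neg_right matrix_mul_assoc cancel2)
    finally show ?thesis .
  qed
  have h2: "matrix_inv A13 ** A12 ** matrix_inv A32 ** A31 = - (matrix_inv A23 ** A21)"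
  proof -
    have "matrix_inv A13 ** A12 ** matrix_inv A32 ** A31
        = matrix_inv A23 ** (A23 ** matrix_inv A13 ** A12) ** matrix_inv A32 ** A31"
      using i by (simp add: matrix_mul_assoc cancel3)
    also have "\<dots> = matrix_inv A23 ** (- (A21 ** matrix_inv A31 ** A32)) ** matrix_inv A32 ** A31"
      by (simp only: r2)
    also have "\<dots> = - (matrix_inv A23 ** A21)"
      using i by (simp add: mm_neg_left mm_neg_right matrix_mul_assoc cancel1 cancel2)
    finally show ?thesis .
  qed
  have "matrix_inv A31 ** A34 ** matrix_inv A14 ** A12 ** matrix_inv A32 ** A31
       = - (matrix_inv A41 ** A43 ** matrix_inv A13) ** A12 ** matrix_inv A32 ** A31"
    by (simp only: h1)
  also have "\<dots> = - ((matrix_inv A41 ** A43) ** (matrix_inv A13 ** A12 ** matrix_inv A32 ** A31))"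
    by (simp add: mm_neg_left matrix_mul_assoc)
  also have "\<dots> = matrix_inv A41 ** A43 ** matrix_inv A23 ** A21"
    by (simp only: h2 mm_neg_right minus_minus) (simp add: matrix_mul_assoc)
  finally show ?thesis .
qed


lemma mv_axis: "((A::real^'n^'m) *v axis l 1) $ k = A $ k $ l"
proof -
  have "((A::real^'n^'m) *v axis l 1) $ k = (\<Sum>j\<in>UNIV. (if j = l then A $ k $ j else 0))"
    unfolding matrix_vector_mult_def axis_def vec_lambda_beta by (intro sum.cong) auto
  then show ?thesis by simp
qed

lemma comb_axis: "comb v (axis l 1) = v l"
proof -
  have "comb v (axis l 1) = (\<Sum>k\<in>UNIV. (if k = l then v k else 0))"
    unfolding comb_def axis_def by (intro sum.cong) auto
  then show ?thesis by simp
qed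

lemma matrix_in_basis_comb:
  assumes "\<And>a. T (comb v a) = comb v (A *v a)"
  shows "matrix_in_basis T v A"
  unfolding matrix_in_basis_def
proof
  fix l
  have "T (v l) = comb v (A *v axis l 1)" using assms[of "axis l 1"] by (simp add: comb_axis)
  also have "\<dots> = (\<Sum>k\<in>UNIV. (A$k$l) *\<^sub>R v k)" by (simp add: comb_def mv_axis)
  finally show "T (v l) = (\<Sum>k\<in>UNIV. (A$k$l) *\<^sub>R v k)" .
qed

theorem lemma3p19:
  fixes L1 L2 L3 L4 :: "'n::finite sympl set"
    and v1 v2 v3 v4 :: "'n \<Rightarrow> 'n sympl"
  assumes "decorated_lagrangian L1 v1" "decorated_lagrangian L2 v2"
    and "decorated_lagrangian L3 v3" "decorated_lagrangian L4 v4"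
    and "transverse L1 L2" "transverse L1 L3" "transverse L1 L4"
    and "transverse L2 L3" "transverse L2 L4" "transverse L3 L4"
  shows "matrix_in_basis (cross_ratio L1 L2 L3 L4) v1
           (- (matrix_inv (Lam v3 v1) ** Lam v3 v4 ** matrix_inv (Lam v1 v4) ** Lam v1 v2
               ** matrix_inv (Lam v3 v2) ** Lam v3 v1))
      \<and> - (matrix_inv (Lam v3 v1) ** Lam v3 v4 ** matrix_inv (Lam v1 v4) ** Lam v1 v2
               ** matrix_inv (Lam v3 v2) ** Lam v3 v1)
        = - (matrix_inv (Lam v4 v1) ** Lam v4 v3 ** matrix_inv (Lam v2 v3) ** Lam v2 v1)"
proof -
  note d1 = assms(1) and d2 = assms(2) and d3 = assms(3) and d4 = assms(4)
  note t13 = assms(6) and t14 = assms(7) and t23 = assms(8)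
  have eq: "matrix_inv (Lam v3 v1) ** Lam v3 v4 ** matrix_inv (Lam v1 v4) ** Lam v1 v2
               ** matrix_inv (Lam v3 v2) ** Lam v3 v1
        = matrix_inv (Lam v4 v1) ** Lam v4 v3 ** matrix_inv (Lam v2 v3) ** Lam v2 v1"
    by (rule alg[OF Lam_inv[OF d3 d1 transverse_sym[OF t13]] Lam_inv[OF d1 d3 t13]
          Lam_inv[OF d4 d1 transverse_sym[OF t14]] Lam_inv[OF d1 d4 t14]
          Lam_inv[OF d2 d3 t23] Lam_inv[OF d3 d2 transverse_sym[OF t23]]
          rel[OF d1 d3 t13 d4] rel[OF d1 d3 t13 d2]])
  have "matrix_in_basis (cross_ratio L1 L2 L3 L4) v1
          (- (matrix_inv (Lam v4 v1) ** Lam v4 v3 ** matrix_inv (Lam v2 v3) ** Lam v2 v1))"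
  proof (rule matrix_in_basis_comb)
    fix a
    have "cross_ratio L1 L2 L3 L4 (comb v1 a)
        = - graph_map L4 L3 L1 (comb v3 (- (matrix_inv (Lam v2 v3) ** Lam v2 v1) *v a))"
      by (simp add: cross_ratio_def graph_map_eq[OF d2 d3 t23])
    also have "\<dots> = - comb v1 (- (matrix_inv (Lam v4 v1) ** Lam v4 v3) *v
                        (- (matrix_inv (Lam v2 v3) ** Lam v2 v1) *v a))"
      by (simp only: graph_map_eq[OF d4 d1 transverse_sym[OF t14]])
    also have "\<dots> = comb v1 (- (matrix_inv (Lam v4 v1) ** Lam v4 v3 ** matrix_inv (Lam v2 v3) ** Lam v2 v1) *v a)"
      by (simp only: comb_neg[symmetric] mv_neg_left mv_neg_right mm_neg_left mm_neg_right minus_minus matrix_vector_mul_assoc matrix_mul_assoc)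
    finally show "cross_ratio L1 L2 L3 L4 (comb v1 a) = comb v1 (- (matrix_inv (Lam v4 v1) ** Lam v4 v3 ** matrix_inv (Lam v2 v3) ** Lam v2 v1) *v a)" .
  qed
  then show ?thesis using eq by simp
qed

end
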